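(* Let $A$ be a $3$-dimensional zeropotent algebra over a field $K$ with $\mathrm{char}(K)\neq2$ whose structural matrix has rank at least $2$. Then every weak multiplier of $A$ is a scalar multiplication $S_a:x\mapsto ax$ for some $a\in K$; that is, $M(A)=M'(A)=LM(A)=LM'(A)=\{S_a: a\in K\}$.
   Context: $A$ is zeropotent if $x^2=0$ for all $x\in A$. Given a basis $\{e,f,g\}$, write $fg=a_{11}e+a_{12}f+a_{13}g$, $ge=a_{21}e+a_{22}f+a_{23}g$, $ef=a_{31}e+a_{32}f+a_{33}g$; the structural matrix is $(a_{ij})$ (rank $\ge 2$ means at least two of $fg,ge,ef$ are linearly independent). A map $T:A\to A$ (not assumed linear) is a weak multiplier if $xT(y)=T(x)y$ for all $x,y$, a multiplier if $xT(y)=T(xy)=T(x)y$ for all $x,y$; $M(A)$, $M'(A)$ are the sets of multipliers and weak multipliers and $LM(A)$, $LM'(A)$ their linear elements. *)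

theory Defs
  imports "HOL-Analysis.Finite_Cartesian_Product"
begin

text \<open>A 3-dimensional algebra over a field K is modelled as K^3 (coordinates w.r.t. the
basis e = axis 1 1, f = axis 2 1, g = axis 3 1) with a K-bilinear product prd.\<close>

definition bilinear_prod :: "('k::field ^ 3 \<Rightarrow> 'k ^ 3 \<Rightarrow> 'k ^ 3) \<Rightarrow> bool" where
  "bilinear_prod prd \<longleftrightarrow>
     (\<forall>x y z. prd (x + y) z = prd x z + prd y z) \<and>
     (\<forall>x y z. prd x (y + z) = prd x y + prd x z) \<and>
     (\<forall>c x y. prd (c *s x) y = c *s prd x y) \<and>
     (\<forall>c x y. prd x (c *s y) = c *s prd x y)"

definition zeropotent :: "('k::field ^ 3 \<Rightarrow> 'k ^ 3 \<Rightarrow> 'k ^ 3) \<Rightarrow> bool" where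
  "zeropotent prd \<longleftrightarrow> (\<forall>x. prd x x = 0)"

definition lin_indep2 :: "'k::field ^ 3 \<Rightarrow> 'k ^ 3 \<Rightarrow> bool" where
  "lin_indep2 u v \<longleftrightarrow> (\<forall>a b. a *s u + b *s v = 0 \<longrightarrow> a = 0 \<and> b = 0)"

text \<open>Structural matrix has rank at least 2: at least two of fg, ge, ef are linearly independent.\<close>
definition struct_rank_ge2 :: "('k::field ^ 3 \<Rightarrow> 'k ^ 3 \<Rightarrow> 'k ^ 3) \<Rightarrow> bool" where
  "struct_rank_ge2 prd \<longleftrightarrow>
     (let e = axis 1 1; f = axis 2 1; g = axis 3 1 in
       lin_indep2 (prd f g) (prd g e) \<or> lin_indep2 (prd f g) (prd e f) \<or>
       lin_indep2 (prd g e) (prd e f))"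

definition weak_multiplier :: "('a \<Rightarrow> 'a \<Rightarrow> 'a) \<Rightarrow> ('a \<Rightarrow> 'a) \<Rightarrow> bool" where
  "weak_multiplier prd T \<longleftrightarrow> (\<forall>x y. prd x (T y) = prd (T x) y)"

definition multiplier :: "('a \<Rightarrow> 'a \<Rightarrow> 'a) \<Rightarrow> ('a \<Rightarrow> 'a) \<Rightarrow> bool" where
  "multiplier prd T \<longleftrightarrow> (\<forall>x y. prd x (T y) = T (prd x y) \<and> T (prd x y) = prd (T x) y)"

definition M_set where "M_set prd = {T. multiplier prd T}"
definition M'_set where "M'_set prd = {T. weak_multiplier prd T}"
definition LM_set :: "('k::field ^ 3 \<Rightarrow> 'k ^ 3 \<Rightarrow> 'k ^ 3) \<Rightarrow> ('k ^ 3 \<Rightarrow> 'k ^ 3) set" where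
  "LM_set prd = {T. multiplier prd T \<and> Vector_Spaces.linear (*s) (*s) T}"
definition LM'_set :: "('k::field ^ 3 \<Rightarrow> 'k ^ 3 \<Rightarrow> 'k ^ 3) \<Rightarrow> ('k ^ 3 \<Rightarrow> 'k ^ 3) set" where
  "LM'_set prd = {T. weak_multiplier prd T \<and> Vector_Spaces.linear (*s) (*s) T}"

end

theory Submission imports Defs "HOL-Analysis.Cartesian_Space" begin

lemma decomp3: "(x::'k::field^3) = (x$1) *s axis 1 1 + (x$2) *s axis 2 1 + (x$3) *s axis 3 1"
  by (simp add: vec_eq_iff forall_3 axis_def)

lemma prd_expand:
  fixes prd :: "'k::field ^ 3 \<Rightarrow> 'k ^ 3 \<Rightarrow> 'k ^ 3"
  assumes b: "bilinear_prod prd" and z: "zeropotent prd"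
  shows "prd x y = (x$2*y$3 - x$3*y$2) *s prd (axis 2 1) (axis 3 1)
     + (x$3*y$1 - x$1*y$3) *s prd (axis 3 1) (axis 1 1)
     + (x$1*y$2 - x$2*y$1) *s prd (axis 1 1) (axis 2 1)"
proof -
  have add1: "\<And>x y z. prd (x + y) z = prd x z + prd y z"
   and add2: "\<And>x y z. prd x (y + z) = prd x y + prd x z"
   and sc1: "\<And>c x y. prd (c *s x) y = c *s prd x y"
   and sc2: "\<And>c x y. prd x (c *s y) = c *s prd x y"
    using b unfolding bilinear_prod_def by auto
  have zz: "\<And>x. prd x x = 0" using z unfolding zeropotent_def by auto
  have anti: "\<And>x y. prd y x = - prd x y"
  proof -
    fix x y
    have "prd (x+y) (x+y) = prd x x + prd x y + (prd y x + prd y y)" by (simp only: add1 add2 ac_simps)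
    then have "0 = prd x y + prd y x" by (simp add: zz)
    then show "prd y x = - prd x y" by (metis add.commute add_eq_0_iff)
  qed
  define e where "e = (axis 1 1 :: 'k^3)"
  define f where "f = (axis 2 1 :: 'k^3)"
  define g where "g = (axis 3 1 :: 'k^3)"
  have "prd x y = prd ((x$1) *s e + (x$2) *s f + (x$3) *s g) ((y$1) *s e + (y$2) *s f + (y$3) *s g)"
    using decomp3[of x] decomp3[of y] unfolding e_def f_def g_def by simp
  also have "\<dots> = (x$2*y$3 - x$3*y$2) *s prd f g + (x$3*y$1 - x$1*y$3) *s prd g e
     + (x$1*y$2 - x$2*y$1) *s prd e f"
    apply (simp add: add1 add2 sc1 sc2 zz anti[of e f] anti[of f g] anti[of g e] vector_smult_assoc)
    apply (simp add: vec_eq_iff algebra_simps)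
    done
  finally show ?thesis unfolding e_def f_def g_def .
qed


lemma li2: "lin_indep2 p q \<Longrightarrow> a *s p + b *s q = r \<Longrightarrow> r = 0 \<Longrightarrow> a = 0 \<and> b = 0"
  unfolding lin_indep2_def by blast

lemma basic_facts:
  fixes prd :: "'k::field ^ 3 \<Rightarrow> 'k ^ 3 \<Rightarrow> 'k ^ 3"
  assumes b: "bilinear_prod prd" and z: "zeropotent prd"
  shows "prd (axis 1 1) y = (-(y$3)) *s prd (axis 3 1) (axis 1 1) + (y$2) *s prd (axis 1 1) (axis 2 1)"
    and "prd (axis 2 1) y = (y$3) *s prd (axis 2 1) (axis 3 1) + (-(y$1)) *s prd (axis 1 1) (axis 2 1)"
    and "prd (axis 3 1) y = (-(y$2)) *s prd (axis 2 1) (axis 3 1) + (y$1) *s prd (axis 3 1) (axis 1 1)"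
  by (subst prd_expand[OF b z], simp add: axis_def vector_smult_lneg)+

lemma anti:
  fixes prd :: "'k::field ^ 3 \<Rightarrow> 'k ^ 3 \<Rightarrow> 'k ^ 3"
  assumes b: "bilinear_prod prd" and z: "zeropotent prd"
  shows "prd y x = - prd x y"
proof -
  have add1: "\<And>x y z. prd (x + y) z = prd x z + prd y z"
   and add2: "\<And>x y z. prd x (y + z) = prd x y + prd x z"
    using b unfolding bilinear_prod_def by auto
  have zz: "\<And>x. prd x x = 0" using z unfolding zeropotent_def by auto
  have "prd (x+y) (x+y) = prd x x + prd x y + (prd y x + prd y y)" by (simp only: add1 add2 ac_simps)
  then have "0 = prd x y + prd y x" by (simp add: zz)
  then show ?thesis by (metis add.commute add_eq_0_iff)
qed

lemma basis_scalar:
  fixes prd :: "'k::field ^ 3 \<Rightarrow> 'k ^ 3 \<Rightarrow> 'k ^ 3"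
  assumes two: "(2::'k) \<noteq> 0" and b: "bilinear_prod prd" and z: "zeropotent prd"
    and r: "struct_rank_ge2 prd" and W: "\<And>x y. prd x (T y) = prd (T x) y"
  shows "\<exists>a. T (axis 1 1) = a *s axis 1 1 \<and> T (axis 2 1) = a *s axis 2 1 \<and> T (axis 3 1) = a *s axis 3 1"
proof -
  define e where "e = (axis 1 1 :: 'k^3)"
  define f where "f = (axis 2 1 :: 'k^3)"
  define g where "g = (axis 3 1 :: 'k^3)"
  define c1 where "c1 = prd f g"
  define c2 where "c2 = prd g e"
  define c3 where "c3 = prd e f"
  define u where "u = T e"
  define v where "v = T f"
  define w where "w = T g"
  note BF = basic_facts[OF b z, folded e_def f_def g_def c1_def c2_def c3_def]
  have self: "prd x (T x) = 0" for x
  proof -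
    have "prd x (T x) = - prd x (T x)" using W[of x x] anti[OF b z, of x "T x"] by simp
    then have "(2::'k) *s prd x (T x) = 0" by (simp add: vec_eq_iff)
    then show ?thesis using two by (simp add: vec_eq_iff)
  qed
  have cross: "prd x (T y) + prd y (T x) = 0" for x y
    using W[of x y] anti[OF b z, of "T x" y] by simp
  have S1: "(-(u$3)) *s c2 + (u$2) *s c3 = 0" using self[of e] BF(1)[of u] by (simp add: u_def e_def)
  have S2: "(v$3) *s c1 + (-(v$1)) *s c3 = 0" using self[of f] BF(2)[of v] by (simp add: v_def f_def)
  have S3: "(-(w$2)) *s c1 + (w$1) *s c2 = 0" using self[of g] BF(3)[of w] by (simp add: w_def g_def)
  have X1: "(-(v$3)) *s c2 + (v$2) *s c3 + ((u$3) *s c1 + (-(u$1)) *s c3) = 0"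
    using cross[of e f] BF(1)[of v] BF(2)[of u] by (simp add: u_def v_def e_def f_def)
  have X2: "(-(w$3)) *s c2 + (w$2) *s c3 + ((-(u$2)) *s c1 + (u$1) *s c2) = 0"
    using cross[of e g] BF(1)[of w] BF(3)[of u] by (simp add: u_def w_def e_def g_def)
  have X3: "(w$3) *s c1 + (-(w$1)) *s c3 + ((-(v$2)) *s c1 + (v$1) *s c2) = 0"
    using cross[of f g] BF(2)[of w] BF(3)[of v] by (simp add: v_def w_def f_def g_def)
  have fin: "\<exists>a. T e = a *s e \<and> T f = a *s f \<and> T g = a *s g"
    if "u$1 = a" "u$2 = 0" "u$3 = 0" "v$1 = 0" "v$2 = a" "v$3 = 0" "w$1 = 0" "w$2 = 0" "w$3 = a" for a
    using that unfolding u_def v_def w_def e_def f_def g_def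
    by (intro exI[of _ a]) (simp add: vec_eq_iff forall_3 axis_def)
  have "lin_indep2 c1 c2 \<or> lin_indep2 c1 c3 \<or> lin_indep2 c2 c3"
    using r unfolding struct_rank_ge2_def Let_def c1_def c2_def c3_def e_def f_def g_def by simp
  then have "\<exists>a. T e = a *s e \<and> T f = a *s f \<and> T g = a *s g"
  proof (elim disjE)
    assume L: "lin_indep2 c1 c2"
    have w12: "w$2 = 0" "w$1 = 0" using li2[OF L refl S3] by simp_all
    have "(-(u$2)) *s c1 + (u$1 - w$3) *s c2 = (-(w$3)) *s c2 + (w$2) *s c3 + ((-(u$2)) *s c1 + (u$1) *s c2)"
      using w12 by (simp add: vec_eq_iff algebra_simps)
    from li2[OF L this X2] have u12: "u$2 = 0" "u$1 = w$3" by auto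
    have "(w$3 - v$2) *s c1 + (v$1) *s c2 = (w$3) *s c1 + (-(w$1)) *s c3 + ((-(v$2)) *s c1 + (v$1) *s c2)"
      using w12 by (simp add: vec_eq_iff algebra_simps)
    from li2[OF L this X3] have v12: "v$2 = w$3" "v$1 = 0" by auto
    have "0 *s c1 + (-(u$3)) *s c2 = (-(u$3)) *s c2 + (u$2) *s c3"
      using u12 by (simp add: vec_eq_iff algebra_simps)
    from li2[OF L this S1] have u3: "u$3 = 0" by auto
    have "(v$3) *s c1 + 0 *s c2 = (v$3) *s c1 + (-(v$1)) *s c3"
      using v12 by (simp add: vec_eq_iff algebra_simps)
    from li2[OF L this S2] have v3: "v$3 = 0" by auto
    show ?thesis using fin[of "w$3"] w12 u12 v12 u3 v3 by simp
  next
    assume L: "lin_indep2 c1 c3"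
    have v13: "v$3 = 0" "v$1 = 0" using li2[OF L refl S2] by simp_all
    have "(u$3) *s c1 + (v$2 - u$1) *s c3 = (-(v$3)) *s c2 + (v$2) *s c3 + ((u$3) *s c1 + (-(u$1)) *s c3)"
      using v13 by (simp add: vec_eq_iff algebra_simps)
    from li2[OF L this X1] have u13: "u$3 = 0" "v$2 = u$1" by auto
    have "(w$3 - v$2) *s c1 + (-(w$1)) *s c3 = (w$3) *s c1 + (-(w$1)) *s c3 + ((-(v$2)) *s c1 + (v$1) *s c2)"
      using v13 by (simp add: vec_eq_iff algebra_simps)
    from li2[OF L this X3] have w13: "w$3 = v$2" "w$1 = 0" by auto
    have "0 *s c1 + (u$2) *s c3 = (-(u$3)) *s c2 + (u$2) *s c3"
      using u13 by (simp add: vec_eq_iff algebra_simps)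
    from li2[OF L this S1] have u2: "u$2 = 0" by auto
    have "(-(w$2)) *s c1 + 0 *s c3 = (-(w$2)) *s c1 + (w$1) *s c2"
      using w13 by (simp add: vec_eq_iff algebra_simps)
    from li2[OF L this S3] have w2: "w$2 = 0" by auto
    show ?thesis using fin[of "u$1"] v13 u13 w13 u2 w2 by simp
  next
    assume L: "lin_indep2 c2 c3"
    have u23: "u$3 = 0" "u$2 = 0" using li2[OF L refl S1] by simp_all
    have "(-(v$3)) *s c2 + (v$2 - u$1) *s c3 = (-(v$3)) *s c2 + (v$2) *s c3 + ((u$3) *s c1 + (-(u$1)) *s c3)"
      using u23 by (simp add: vec_eq_iff algebra_simps)
    from li2[OF L this X1] have v23: "v$3 = 0" "v$2 = u$1" by auto
    have "(u$1 - w$3) *s c2 + (w$2) *s c3 = (-(w$3)) *s c2 + (w$2) *s c3 + ((-(u$2)) *s c1 + (u$1) *s c2)"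
      using u23 by (simp add: vec_eq_iff algebra_simps)
    from li2[OF L this X2] have w23: "w$3 = u$1" "w$2 = 0" by auto
    have "0 *s c2 + (-(v$1)) *s c3 = (v$3) *s c1 + (-(v$1)) *s c3"
      using v23 by (simp add: vec_eq_iff algebra_simps)
    from li2[OF L this S2] have v1: "v$1 = 0" by auto
    have "(w$1) *s c2 + 0 *s c3 = (-(w$2)) *s c1 + (w$1) *s c2"
      using w23 by (simp add: vec_eq_iff algebra_simps)
    from li2[OF L this S3] have w1: "w$1 = 0" by auto
    show ?thesis using fin[of "u$1"] u23 v23 w23 v1 w1 by simp
  qed
  then show ?thesis unfolding e_def f_def g_def .
qed

theorem theorem7p2:
  fixes prd :: "'k::field ^ 3 \<Rightarrow> 'k ^ 3 \<Rightarrow> 'k ^ 3"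
  assumes "(2::'k) \<noteq> 0"
    and "bilinear_prod prd"
    and "zeropotent prd"
    and "struct_rank_ge2 prd"
  shows "M_set prd = M'_set prd \<and> M'_set prd = LM_set prd \<and> LM_set prd = LM'_set prd \<and>
         LM'_set prd = {(\<lambda>x. a *s x) | a. True}"
proof -
  have b: "bilinear_prod prd" and z: "zeropotent prd" using assms by auto
  have sc1: "\<And>c x y. prd (c *s x) y = c *s prd x y"
   and sc2: "\<And>c x y. prd x (c *s y) = c *s prd x y"
   and add2: "\<And>x y z. prd x (y + z) = prd x y + prd x z"
    using b unfolding bilinear_prod_def by auto
  have sub2: "prd x (y - z) = prd x y - prd x z" for x y z
    using add2[of x "y - z" z] by (simp add: algebra_simps)
  have key: "\<exists>a. T = (\<lambda>x. a *s x)" if W0: "weak_multiplier prd T" for T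
  proof -
    have W: "\<And>x y. prd x (T y) = prd (T x) y" using W0 unfolding weak_multiplier_def by auto
    obtain a where a: "T (axis 1 1) = a *s axis 1 1" "T (axis 2 1) = a *s axis 2 1"
      "T (axis 3 1) = a *s axis 3 1" using basis_scalar[OF assms(1-4) W] by blast
    have "T x = a *s x" for x
    proof -
      define zz where "zz = T x - a *s x"
      have bz: "prd bb zz = 0" if "T bb = a *s bb" for bb
        unfolding zz_def sub2 W that sc1 sc2 by simp
      note BF = basic_facts[OF b z]
      define c1 where "c1 = prd (axis 2 1) (axis 3 1 :: 'k^3)"
      define c2 where "c2 = prd (axis 3 1) (axis 1 1 :: 'k^3)"
      define c3 where "c3 = prd (axis 1 1) (axis 2 1 :: 'k^3)"
      have E: "(-(zz$3)) *s c2 + (zz$2) *s c3 = 0" using bz[OF a(1)] BF(1)[of zz]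
        unfolding c2_def c3_def by simp
      have F: "(zz$3) *s c1 + (-(zz$1)) *s c3 = 0" using bz[OF a(2)] BF(2)[of zz]
        unfolding c1_def c3_def by simp
      have G: "(-(zz$2)) *s c1 + (zz$1) *s c2 = 0" using bz[OF a(3)] BF(3)[of zz]
        unfolding c1_def c2_def by simp
      have "lin_indep2 c1 c2 \<or> lin_indep2 c1 c3 \<or> lin_indep2 c2 c3"
        using assms(4) unfolding struct_rank_ge2_def Let_def c1_def c2_def c3_def by simp
      then have "zz$1 = 0 \<and> zz$2 = 0 \<and> zz$3 = 0"
      proof (elim disjE)
        assume L: "lin_indep2 c1 c2"
        have h: "zz$2 = 0" "zz$1 = 0" using li2[OF L refl G] by simp_all
        have "0 *s c1 + (-(zz$3)) *s c2 = (-(zz$3)) *s c2 + (zz$2) *s c3" using h by simp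
        from li2[OF L this E] h show ?thesis by simp
      next
        assume L: "lin_indep2 c1 c3"
        have h: "zz$3 = 0" "zz$1 = 0" using li2[OF L refl F] by simp_all
        have "0 *s c1 + (zz$2) *s c3 = (-(zz$3)) *s c2 + (zz$2) *s c3" using h by simp
        from li2[OF L this E] h show ?thesis by simp
      next
        assume L: "lin_indep2 c2 c3"
        have h: "zz$3 = 0" "zz$2 = 0" using li2[OF L refl E] by simp_all
        have "0 *s c2 + (-(zz$1)) *s c3 = (zz$3) *s c1 + (-(zz$1)) *s c3" using h by simp
        from li2[OF L this F] h show ?thesis by simp
      qed
      then have "zz = 0" by (simp add: vec_eq_iff forall_3)
      then show ?thesis unfolding zz_def by simp
    qed
    then have "T = (\<lambda>x. a *s x)" by (rule ext)
    then show ?thesis by (rule exI)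
  qed
  have mult: "multiplier prd (\<lambda>x. a *s x)" for a
    unfolding multiplier_def by (simp add: sc1 sc2)
  have lin: "Vector_Spaces.linear (*s) (*s) (\<lambda>x. a *s x :: 'k^3)" for a
    by (rule vec.linear_scale_self)
  have m2w: "multiplier prd T \<Longrightarrow> weak_multiplier prd T" for T
    unfolding multiplier_def weak_multiplier_def by metis
  have S1: "M_set prd = {(\<lambda>x. a *s x) | a. True}"
  proof (rule set_eqI, rule iffI)
    fix T :: "'k^3 \<Rightarrow> 'k^3" assume "T \<in> M_set prd"
    then have "weak_multiplier prd T" unfolding M_set_def using m2w by auto
    from key[OF this] obtain a where "T = (\<lambda>x. a *s x)" by blast
    then show "T \<in> {(\<lambda>x. a *s x) | a. True}" by blast
  next
    fix T :: "'k^3 \<Rightarrow> 'k^3" assume "T \<in> {(\<lambda>x. a *s x) | a. True}"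
    then obtain a where "T = (\<lambda>x. a *s x)" by blast
    then show "T \<in> M_set prd" unfolding M_set_def using mult[of a] m2w[of T] lin[of a] by auto
  qed
  have S2: "M'_set prd = {(\<lambda>x. a *s x) | a. True}"
  proof (rule set_eqI, rule iffI)
    fix T :: "'k^3 \<Rightarrow> 'k^3" assume "T \<in> M'_set prd"
    then have "weak_multiplier prd T" unfolding M'_set_def using m2w by auto
    from key[OF this] obtain a where "T = (\<lambda>x. a *s x)" by blast
    then show "T \<in> {(\<lambda>x. a *s x) | a. True}" by blast
  next
    fix T :: "'k^3 \<Rightarrow> 'k^3" assume "T \<in> {(\<lambda>x. a *s x) | a. True}"
    then obtain a where "T = (\<lambda>x. a *s x)" by blast
    then show "T \<in> M'_set prd" unfolding M'_set_def using mult[of a] m2w[of T] lin[of a] by auto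
  qed
  have S3: "LM_set prd = {(\<lambda>x. a *s x) | a. True}"
  proof (rule set_eqI, rule iffI)
    fix T :: "'k^3 \<Rightarrow> 'k^3" assume "T \<in> LM_set prd"
    then have "weak_multiplier prd T" unfolding LM_set_def using m2w by auto
    from key[OF this] obtain a where "T = (\<lambda>x. a *s x)" by blast
    then show "T \<in> {(\<lambda>x. a *s x) | a. True}" by blast
  next
    fix T :: "'k^3 \<Rightarrow> 'k^3" assume "T \<in> {(\<lambda>x. a *s x) | a. True}"
    then obtain a where "T = (\<lambda>x. a *s x)" by blast
    then show "T \<in> LM_set prd" unfolding LM_set_def using mult[of a] m2w[of T] lin[of a] by auto
  qed
  have S4: "LM'_set prd = {(\<lambda>x. a *s x) | a. True}"
  proof (rule set_eqI, rule iffI)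
    fix T :: "'k^3 \<Rightarrow> 'k^3" assume "T \<in> LM'_set prd"
    then have "weak_multiplier prd T" unfolding LM'_set_def using m2w by auto
    from key[OF this] obtain a where "T = (\<lambda>x. a *s x)" by blast
    then show "T \<in> {(\<lambda>x. a *s x) | a. True}" by blast
  next
    fix T :: "'k^3 \<Rightarrow> 'k^3" assume "T \<in> {(\<lambda>x. a *s x) | a. True}"
    then obtain a where "T = (\<lambda>x. a *s x)" by blast
    then show "T \<in> LM'_set prd" unfolding LM'_set_def using mult[of a] m2w[of T] lin[of a] by auto
  qed
  show ?thesis using S1 S2 S3 S4 by simp
qed

end
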